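(* Let $k\geqslant 1$, let $n_1,\ldots,n_k$ be positive integers and $a_1,\ldots,a_k$ integers with $0\leqslant a_s<n_s$ for each $s$. Suppose that $p$ is a prime such that $$\sum_{s=1}^k\frac{e^{2\pi i a_s/p}}{1-e^{2\pi i n_s/p}}=0.$$ Then $$n_1+\cdots+n_k-k+1\geqslant |S(n_1,\ldots,n_k)|\geqslant p.$$
   Context: For positive integers $n_1,\ldots,n_k$, $S(n_1,\ldots,n_k)=\{r/n_s: r=0,\ldots,n_s-1;\ s=1,\ldots,k\}$, a set of rational numbers, and $|S(\cdot)|$ denotes its cardinality. (The hypothesis implicitly requires $p\nmid n_s$ for all $s$, so that the denominators are nonzero.) *)

theory Defs
  imports "HOL-Analysis.Analysis"
begin

definition S_set :: "nat \<Rightarrow> (nat \<Rightarrow> nat) \<Rightarrow> rat set" where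
  "S_set k n = {of_nat r / of_nat (n s) | r s. s \<in> {1..k} \<and> r < n s}"

end

theory Submission
  imports Defs "HOL-Computational_Algebra.Fundamental_Theorem_Algebra"
begin

lemma eis_one:
  fixes A B E :: "int poly" and p :: int
  assumes pr: "prime p" and E: "A * B = E" and sq: "\<not> p^2 dvd coeff E 0"
    and low: "\<And>k. k < degree E \<Longrightarrow> p dvd coeff E k" and ld: "\<not> p dvd lead_coeff E"
    and a0: "p dvd coeff A 0"
  shows "degree B = 0"
proof -
  have "E \<noteq> 0" using ld by auto
  hence A0: "A \<noteq> 0" and B0: "B \<noteq> 0" using E by auto
  have degE: "degree E = degree A + degree B" using E A0 B0 degree_mult_eq by blast
  have b0: "\<not> p dvd coeff B 0"
  proof
    assume "p dvd coeff B 0"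
    with a0 have "p * p dvd coeff A 0 * coeff B 0" by (rule mult_dvd_mono)
    thus False using sq E[symmetric] by (simp add: power2_eq_square coeff_mult_0)
  qed
  have ex: "\<exists>i. \<not> p dvd coeff A i"
  proof (rule ccontr)
    assume "\<not> ?thesis"
    hence "\<And>n. p dvd coeff E n" unfolding E[symmetric] coeff_mult
      by (auto intro!: dvd_sum)
    thus False using ld by blast
  qed
  define i where "i = (LEAST i. \<not> p dvd coeff A i)"
  have ai: "\<not> p dvd coeff A i" unfolding i_def using ex by (rule LeastI_ex)
  have aj: "p dvd coeff A j" if "j < i" for j using not_less_Least[OF that[unfolded i_def]] by blast
  have "coeff E i = (\<Sum>j<i. coeff A j * coeff B (i - j)) + coeff A i * coeff B 0"
    unfolding E[symmetric] coeff_mult lessThan_Suc_atMost[symmetric] sum.lessThan_Suc by simp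
  moreover have "p dvd (\<Sum>j<i. coeff A j * coeff B (i - j))"
    by (intro dvd_sum) (simp add: aj)
  moreover have "\<not> p dvd coeff A i * coeff B 0" using ai b0 pr by (simp add: prime_dvd_mult_iff)
  ultimately have "\<not> p dvd coeff E i" by (metis dvd_add_right_iff)
  hence "\<not> i < degree E" using low by blast
  moreover have "coeff A i \<noteq> 0" using ai by auto
  hence "i \<le> degree A" by (rule le_degree)
  ultimately show ?thesis using degE by linarith
qed

lemma eisenstein:
  fixes A B E :: "int poly" and p :: int
  assumes pr: "prime p" and E: "A * B = E" and sq: "\<not> p^2 dvd coeff E 0"
    and low: "\<And>k. k < degree E \<Longrightarrow> p dvd coeff E k" and ld: "\<not> p dvd lead_coeff E"
  shows "degree A = 0 \<or> degree B = 0"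
proof (cases "degree E = 0")
  case True
  have "E \<noteq> 0" using ld by auto
  hence "A \<noteq> 0" "B \<noteq> 0" using E by auto
  then show ?thesis using True E degree_mult_eq by fastforce
next
  case False
  hence "p dvd coeff E 0" using low by auto
  hence "p dvd coeff A 0 * coeff B 0" using E[symmetric] by (simp add: coeff_mult_0)
  hence "p dvd coeff A 0 \<or> p dvd coeff B 0" using pr by (simp add: prime_dvd_mult_iff)
  moreover have "B * A = E" using E by (simp add: mult.commute)
  moreover have "degree B = 0" if "p dvd coeff A 0"
    by (rule eis_one[OF pr E sq _ ld that]) (use low in auto)
  moreover have "degree A = 0" if "p dvd coeff B 0"
    by (rule eis_one[OF pr \<open>B * A = E\<close> sq _ ld that]) (use low in auto)
  ultimately show ?thesis by metis
qed

definition ci :: "int poly \<Rightarrow> complex poly" where "ci p = map_poly of_int p"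

lemma ci_add [simp]: "ci (p + q) = ci p + ci q"
  unfolding ci_def by (intro poly_eqI) (simp add: coeff_map_poly)
lemma ci_diff [simp]: "ci (p - q) = ci p - ci q"
  unfolding ci_def by (intro poly_eqI) (simp add: coeff_map_poly)
lemma ci_smult [simp]: "ci (smult c p) = smult (of_int c) (ci p)"
  unfolding ci_def by (intro poly_eqI) (simp add: coeff_map_poly)
lemma ci_monom [simp]: "ci (monom c n) = monom (of_int c) n"
  unfolding ci_def by (simp add: map_poly_monom)
lemma ci_1 [simp]: "ci 1 = 1"
  unfolding ci_def by simp
lemma ci_0 [simp]: "ci 0 = 0"
  unfolding ci_def by simp
lemma ci_mult [simp]: "ci (p * q) = ci p * ci q"
  unfolding ci_def by (intro poly_eqI) (simp add: coeff_map_poly coeff_mult)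
lemma ci_sum [simp]: "ci (\<Sum>x\<in>A. f x) = (\<Sum>x\<in>A. ci (f x))"
  by (induction A rule: infinite_finite_induct) auto
lemma ci_prod [simp]: "ci (\<Prod>x\<in>A. f x) = (\<Prod>x\<in>A. ci (f x))"
  by (induction A rule: infinite_finite_induct) auto

definition Phi :: "nat \<Rightarrow> int poly" where "Phi p = (\<Sum>i<p. monom 1 i)"

lemma coeff_Phi: "coeff (Phi p) j = (if j < p then 1 else 0)"
  unfolding Phi_def coeff_sum coeff_monom by auto

lemma degree_Phi: assumes "p \<ge> 1" shows "degree (Phi p) = p - 1"
proof (rule antisym)
  show "degree (Phi p) \<le> p - 1" by (rule degree_le) (auto simp: coeff_Phi)
  show "p - 1 \<le> degree (Phi p)" by (rule le_degree) (use assms in \<open>auto simp: coeff_Phi\<close>)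
qed

lemma lead_Phi: assumes "p \<ge> 1" shows "lead_coeff (Phi p) = 1"
  using assms by (simp add: degree_Phi coeff_Phi)

lemma content_Phi: assumes "p \<ge> 1" shows "content (Phi p) = 1"
proof -
  have "content (Phi p) dvd 1" using content_dvd_coeff[of "Phi p" "p - 1"] assms
    by (simp add: coeff_Phi)
  hence "normalize (content (Phi p)) = 1" by (simp add: is_unit_normalize)
  thus ?thesis by (metis normalize_content)
qed

lemma poly_Phi: "poly (Phi p) x = (\<Sum>i<p. x ^ i)"
  unfolding Phi_def poly_sum poly_monom by simp

lemma poly_ci_Phi: "poly (ci (Phi p)) x = (\<Sum>i<p. x ^ i)"
  unfolding Phi_def ci_sum ci_monom poly_sum poly_monom by simp

lemma coeff_Phi_shift:
  assumes "p \<ge> 1"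
  shows "coeff (pcompose (Phi p) [:1,1:]) k = (if k < p then int (p choose (Suc k)) else 0)"
proof -
  define E where "E = pcompose (Phi p) [:1,1:]"
  have "pCons 0 E = [:1,1:]^p - 1"
  proof (rule poly_ext)
    fix x :: int
    have "poly (pCons 0 E) x = x * (\<Sum>i<p. (x + 1) ^ i)"
      by (simp add: E_def poly_pcompose poly_Phi add.commute)
    also have "\<dots> = (x + 1) ^ p - 1" using power_diff_1_eq[of "x+1" p] by simp
    finally show "poly (pCons 0 E) x = poly ([:1,1:]^p - 1) x" by (simp add: add.commute)
  qed
  hence "coeff E k = coeff ([:1,1:]^p - 1) (Suc k)" by (metis coeff_pCons_Suc)
  also have "\<dots> = coeff ([:1,1:]^p) (Suc k)" by simp
  also have "\<dots> = (if k < p then int (p choose (Suc k)) else 0)"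
  proof (cases "k < p")
    case True
    then show ?thesis by (subst coeff_linear_poly_power) auto
  next
    case False
    then show ?thesis by (simp add: coeff_eq_0 degree_linear_power)
  qed
  finally show ?thesis unfolding E_def .
qed

definition zeta :: "nat \<Rightarrow> complex" where "zeta p = cis (2 * pi / real p)"

lemma zeta_pow: "zeta p ^ m = exp (2 * of_real pi * \<i> * of_nat m / of_nat p)"
  unfolding zeta_def cis_conv_exp exp_of_nat_mult[symmetric] by (simp add: field_simps)

lemma zeta_pow_eq_1: assumes "p \<ge> 1" shows "zeta p ^ m = 1 \<longleftrightarrow> p dvd m"
  unfolding zeta_pow using complex_root_unity_eq_1[OF assms] by simp

lemma Phi_root:
  assumes pr: "prime p" and j: "\<not> p dvd j"
  shows "poly (ci (Phi p)) (zeta p ^ j) = 0"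
proof -
  have p1: "p \<ge> 1" using prime_gt_0_nat[OF pr] by simp
  define w where "w = zeta p ^ j"
  have "w ^ p = 1" unfolding w_def power_mult[symmetric] using p1 by (simp add: zeta_pow_eq_1)
  moreover have "w \<noteq> 1" unfolding w_def using p1 j by (simp add: zeta_pow_eq_1)
  moreover have "1 - w ^ p = (1 - w) * (\<Sum>i<p. w ^ i)" by (rule one_diff_power_eq)
  ultimately have "(\<Sum>i<p. w ^ i) = 0" by simp
  thus ?thesis unfolding poly_ci_Phi w_def .
qed

lemma ci_const: assumes "degree g = 0" shows "poly (ci g) x = of_int (coeff g 0)"
proof -
  have "g = [:coeff g 0:]" using degree_0_id[OF assms] by simp
  hence "ci g = [:of_int (coeff g 0):]" unfolding ci_def by (metis map_poly_pCons map_poly_0 of_int_0)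
  thus ?thesis by simp
qed

lemma lin_indep:
  assumes pr: "prime p" and dh: "degree h < p - 1" and h0: "poly (ci h) (zeta p) = 0"
  shows "h = 0"
proof (rule ccontr)
  assume "h \<noteq> 0"
  have p1: "p > 1" using prime_gt_1_nat[OF pr] by simp
  define P where "P d \<longleftrightarrow> (\<exists>g. g \<noteq> 0 \<and> degree g = d \<and> poly (ci g) (zeta p) = 0)" for d
  have Ph: "P (degree h)" using \<open>h \<noteq> 0\<close> h0 unfolding P_def by blast
  define d where "d = (LEAST d. P d)"
  have Pd: "P d" unfolding d_def by (rule LeastI) (rule Ph)
  have dle: "d \<le> degree h" unfolding d_def by (rule Least_le) (rule Ph)
  have dmin: "\<not> P e" if "e < d" for e using not_less_Least[OF that[unfolded d_def]] .
  from Pd obtain g where g0: "g \<noteq> 0" and dg: "degree g = d" and gz: "poly (ci g) (zeta p) = 0"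
    unfolding P_def by blast
  have "\<not> p dvd 1" using p1 by auto
  hence zPhi: "poly (ci (Phi p)) (zeta p) = 0" using Phi_root[OF pr, of 1] by simp
  have d0: "d \<noteq> 0"
  proof
    assume "d = 0"
    hence "of_int (coeff g 0) = (0::complex)" using gz dg ci_const by metis
    hence "coeff g 0 = 0" by simp
    hence "g = 0" using degree_0_id[of g] dg \<open>d = 0\<close> by simp
    thus False using g0 by simp
  qed
  obtain q r where qr: "pseudo_divmod (Phi p) g = (q, r)" by (metis surj_pair)
  define c where "c = coeff g (degree g) ^ (Suc (degree (Phi p)) - degree g)"
  have eq: "smult c (Phi p) = g * q + r" and rr: "r = 0 \<or> degree r < degree g"
    using pseudo_divmod[OF g0 qr] c_def by auto
  have c0: "c \<noteq> 0" using g0 by (simp add: c_def)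
  have "poly (ci (smult c (Phi p))) (zeta p) = poly (ci (g * q + r)) (zeta p)" using eq by simp
  hence rz: "poly (ci r) (zeta p) = 0" using zPhi gz by simp
  have r0: "r = 0"
  proof (rule ccontr)
    assume "r \<noteq> 0"
    hence "P (degree r)" using rz unfolding P_def by blast
    moreover have "degree r < d" using rr \<open>r \<noteq> 0\<close> dg by auto
    ultimately show False using dmin by blast
  qed
  have eq': "smult c (Phi p) = g * q" using eq r0 by simp
  have Phi0: "Phi p \<noteq> 0" using lead_Phi[of p] p1 by auto
  have q0: "q \<noteq> 0" using eq' c0 Phi0 by auto
  have degs: "p - 1 = d + degree q"
    using arg_cong[OF eq', of degree] c0 g0 q0 degree_mult_eq[of g q] dg degree_Phi[of p] p1 by simp
  have dq: "degree q \<noteq> 0" using degs dle dh by linarith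
  have pp: "smult (sgn c) (Phi p) = primitive_part g * primitive_part q"
    using arg_cong[OF eq', of primitive_part] p1
    by (simp add: primitive_part_smult primitive_part_prim content_Phi primitive_part_mult)
  define E where "E = pcompose (smult (sgn c) (Phi p)) [:1,1:]"
  define A where "A = pcompose (primitive_part g) [:1,1:]"
  define B where "B = pcompose (primitive_part q) [:1,1:]"
  have AB: "A * B = E" unfolding A_def B_def E_def pp pcompose_mult ..
  have cE: "coeff E k = sgn c * (if k < p then int (p choose (Suc k)) else 0)" for k
    unfolding E_def pcompose_smult coeff_smult using coeff_Phi_shift[of p k] p1 by simp
  have dE: "degree E = p - 1" unfolding E_def pcompose_smult using c0 p1
    by (simp add: degree_pcompose degree_Phi sgn_0_0)
  have sc: "sgn c = 1 \<or> sgn c = -1" using c0 by (simp add: sgn_if)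
  have ip: "prime (int p)" using pr by simp
  have "degree A = 0 \<or> degree B = 0"
  proof (rule eisenstein[OF ip AB])
    show "\<not> (int p)^2 dvd coeff E 0"
    proof
      assume "(int p)^2 dvd coeff E 0"
      hence "(int p)^2 dvd int p" using sc p1 by (auto simp: cE)
      hence "(int p)^2 \<le> int p" using p1 by (intro zdvd_imp_le) auto
      thus False using p1 by (simp add: power2_eq_square)
    qed
    show "int p dvd coeff E k" if "k < degree E" for k
    proof -
      have "p dvd (p choose Suc k)" using that dE p1 by (intro dvd_choose_prime pr) auto
      hence "int p dvd int (p choose Suc k)" by simp
      thus ?thesis using that dE by (simp add: cE)
    qed
    show "\<not> int p dvd lead_coeff E"
    proof
      assume "int p dvd lead_coeff E"
      hence "int p dvd 1" using sc dE p1 by (auto simp: cE)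
      thus False using p1 by simp
    qed
  qed
  moreover have "degree A = d" unfolding A_def by (simp add: degree_pcompose dg)
  moreover have "degree B = degree q" unfolding B_def by (simp add: degree_pcompose)
  ultimately show False using d0 dq by simp
qed

lemma conj_root:
  assumes pr: "prime p" and Gz: "poly (ci G) (zeta p) = 0" and j: "\<not> p dvd j"
  shows "poly (ci G) (zeta p ^ j) = 0"
proof -
  have p1: "p > 1" using prime_gt_1_nat[OF pr] by simp
  define X :: "int poly" where "X = monom 1 p - 1"
  have dX: "degree X = p"
  proof (rule antisym)
    show "degree X \<le> p" unfolding X_def by (rule degree_le) (auto simp: coeff_monom coeff_1)
    show "p \<le> degree X" unfolding X_def using p1 by (intro le_degree) (auto simp: coeff_monom coeff_1)
  qed
  hence X0: "X \<noteq> 0" using p1 by auto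
  have lX: "coeff X (degree X) = 1" unfolding dX unfolding X_def using p1 by simp
  have Xz: "poly (ci X) (zeta p ^ m) = 0" for m
  proof -
    have "(zeta p ^ m) ^ p = 1" unfolding power_mult[symmetric] using p1 by (simp add: zeta_pow_eq_1)
    thus ?thesis unfolding X_def by (simp add: poly_monom)
  qed
  obtain q r where qr: "pseudo_divmod G X = (q, r)" by (metis surj_pair)
  have eq: "G = X * q + r" and rr: "r = 0 \<or> degree r < p"
    using pseudo_divmod[OF X0 qr] lX dX by auto
  have rz: "poly (ci r) (zeta p) = 0" using Gz Xz[of 1] by (simp add: eq)
  define c where "c = coeff r (p - 1)"
  define h where "h = r - smult c (Phi p)"
  have cr: "coeff r i = 0" if "i \<ge> p" for i
    using rr that by (auto intro: coeff_eq_0)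
  have "degree h \<le> p - 2"
  proof (rule degree_le, intro allI impI)
    fix i assume "p - 2 < i"
    hence "i = p - 1 \<or> i \<ge> p" by linarith
    thus "coeff h i = 0" unfolding h_def c_def using cr p1 by (auto simp: coeff_Phi)
  qed
  hence dh: "degree h < p - 1" using p1 by linarith
  have "\<not> p dvd 1" using p1 by auto
  hence zPhi: "poly (ci (Phi p)) (zeta p) = 0" using Phi_root[OF pr, of 1] by simp
  have "poly (ci h) (zeta p) = 0" unfolding h_def using rz zPhi by simp
  hence "h = 0" by (rule lin_indep[OF pr dh])
  hence "r = smult c (Phi p)" unfolding h_def by simp
  thus ?thesis using Xz[of j] Phi_root[OF pr j] by (simp add: eq)
qed

lemma degree_monom_minus_1:
  assumes "n \<ge> 1" shows "degree (monom 1 n - 1 :: 'a :: comm_ring_1 poly) = n"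
proof (rule antisym)
  show "degree (monom 1 n - 1 :: 'a poly) \<le> n" by (rule degree_le) (auto simp: coeff_monom coeff_1)
  show "n \<le> degree (monom 1 n - 1 :: 'a poly)" using assms by (intro le_degree) (auto simp: coeff_monom coeff_1)
qed

lemma roots_unity_decomp:
  assumes n: "n \<ge> 1"
  shows "(\<Prod>w\<in>{z::complex. z ^ n = 1}. [:-w, 1:]) = monom 1 n - 1"
proof -
  define X :: "complex poly" where "X = monom 1 n - 1"
  have dX: "degree X = n" unfolding X_def using n by (rule degree_monom_minus_1)
  have lX: "lead_coeff X = 1" unfolding dX unfolding X_def using n by simp
  have pX: "poly X z = z ^ n - 1" for z unfolding X_def by (simp add: poly_monom)
  have "rsquarefree X" unfolding rsquarefree_roots
  proof (intro allI notI)
    fix a assume "poly X a = 0 \<and> poly (pderiv X) a = 0"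
    hence a1: "a ^ n = 1" and "of_nat n * a ^ (n - 1) = 0"
      by (auto simp: pX X_def pderiv_diff pderiv_monom poly_monom)
    hence "a ^ (n - 1) = 0" using n by simp
    hence "a = 0" by simp
    thus False using a1 n by (simp add: power_0_left)
  qed
  from complex_poly_decompose_rsquarefree[OF this]
  have "(\<Prod>z|poly X z = 0. [:-z, 1:]) = X" using lX by simp
  moreover have "{z. poly X z = 0} = {z. z ^ n = 1}" by (auto simp: pX)
  ultimately show ?thesis unfolding X_def by simp
qed

lemma card_S_upper:
  assumes k1: "k \<ge> 1" and npos: "\<And>s. s \<in> {1..k} \<Longrightarrow> n s > 0"
  shows "finite (S_set k n) \<and> int (card (S_set k n)) \<le> int (\<Sum>s=1..k. n s) - int k + 1"
proof -
  define T where "T s = (\<lambda>r. of_nat r / of_nat (n s) :: rat) ` {..<n s}" for s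
  have Seq: "S_set k n = (\<Union>s\<in>{1..k}. T s)" unfolding S_set_def T_def by blast
  have fin: "finite (S_set k n)" unfolding Seq T_def by auto
  have T0: "0 \<in> T s" if "s \<in> {1..k}" for s
    using npos[OF that] unfolding T_def by (auto intro!: image_eqI[of _ _ 0])
  have cT: "card (T s) \<le> n s" for s unfolding T_def using card_image_le[of "{..<n s}"] by simp
  have "S_set k n \<subseteq> insert 0 (\<Union>s\<in>{1..k}. T s - {0})" unfolding Seq by auto
  hence "card (S_set k n) \<le> card (insert 0 (\<Union>s\<in>{1..k}. T s - {0}))"
    by (intro card_mono) (auto simp: T_def)
  also have "\<dots> \<le> Suc (card (\<Union>s\<in>{1..k}. T s - {0}))" by (rule card_insert_le_m1) auto
  also have "card (\<Union>s\<in>{1..k}. T s - {0}) \<le> (\<Sum>s=1..k. card (T s - {0}))" by (rule card_UN_le) simp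
  also have "\<dots> \<le> (\<Sum>s=1..k. n s - 1)"
  proof (rule sum_mono)
    fix s assume "s \<in> {1..k}"
    thus "card (T s - {0}) \<le> n s - 1" using T0 cT[of s] by (simp add: card_Diff_singleton T_def)
  qed
  finally have "card (S_set k n) \<le> Suc (\<Sum>s=1..k. n s - 1)" by simp
  hence "int (card (S_set k n)) \<le> 1 + (\<Sum>s=1..k. int (n s) - 1)"
  proof -
    have "int (\<Sum>s=1..k. n s - 1) = (\<Sum>s=1..k. int (n s - 1))" by (rule of_nat_sum)
    also have "\<dots> = (\<Sum>s=1..k. int (n s) - 1)"
      by (rule sum.cong) (use npos in \<open>auto simp: of_nat_diff Suc_le_eq\<close>)
    finally show ?thesis using \<open>card (S_set k n) \<le> Suc (\<Sum>s=1..k. n s - 1)\<close> by linarith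
  qed
  also have "\<dots> = int (\<Sum>s=1..k. n s) - int k + 1" by (simp add: sum_subtractf)
  finally show ?thesis using fin by simp
qed

theorem corollary1p2:
  fixes k p :: nat and n :: "nat \<Rightarrow> nat" and a :: "nat \<Rightarrow> int"
  assumes "k \<ge> 1"
    and "\<And>s. s \<in> {1..k} \<Longrightarrow> n s > 0"
    and "\<And>s. s \<in> {1..k} \<Longrightarrow> 0 \<le> a s \<and> a s < int (n s)"
    and "prime p"
    and "\<And>s. s \<in> {1..k} \<Longrightarrow> \<not> p dvd n s"
    and "(\<Sum>s=1..k. cis (2 * pi * of_int (a s) / of_nat p) /
                       (1 - cis (2 * pi * of_nat (n s) / of_nat p))) = 0"
  shows "int (\<Sum>s=1..k. n s) - int k + 1 \<ge> int (card (S_set k n))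
         \<and> card (S_set k n) \<ge> p"
proof -
  note k1 = assms(1) and npos = assms(2) and arange = assms(3) and pr = assms(4)
    and ndvd = assms(5) and hyp = assms(6)
  from card_S_upper[OF k1 npos] have finS: "finite (S_set k n)"
    and up: "int (card (S_set k n)) \<le> int (\<Sum>s=1..k. n s) - int k + 1" by auto
  define K where "K = {1..k}"
  have finK: "finite K" and Kne: "K \<noteq> {}" using k1 by (auto simp: K_def)
  have p1: "p > 1" using prime_gt_1_nat[OF pr] by simp
  define \<alpha> where "\<alpha> s = nat (a s)" for s
  define \<zeta> where "\<zeta> = zeta p"
  have zpow: "\<zeta> ^ m = cis (real m * (2 * pi / real p))" for m
    unfolding \<zeta>_def zeta_def by (rule Complex.DeMoivre)
  have cis_a: "cis (2 * pi * of_int (a s) / of_nat p) = \<zeta> ^ \<alpha> s" if "s \<in> K" for s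
  proof -
    have "of_int (a s) = real (\<alpha> s)" using arange[of s] that by (simp add: \<alpha>_def K_def)
    thus ?thesis unfolding zpow by (simp add: field_simps)
  qed
  have cis_n: "cis (2 * pi * of_nat (n s) / of_nat p) = \<zeta> ^ n s" for s
    unfolding zpow by (simp add: field_simps)
  define f where "f z = (\<Sum>s\<in>K. z ^ \<alpha> s / (1 - z ^ n s))" for z :: complex
  have fz: "f \<zeta> = 0" unfolding f_def using hyp cis_a cis_n unfolding K_def
    by (metis (no_types, lifting) sum.cong)
  have zne: "(\<zeta> ^ j) ^ n t \<noteq> 1" if "t \<in> K" "\<not> p dvd j" for j t
  proof -
    have "\<not> p dvd j * n t" using that ndvd[of t] pr by (simp add: prime_dvd_mult_iff K_def)
    thus ?thesis unfolding \<zeta>_def power_mult[symmetric] using p1 by (simp add: zeta_pow_eq_1)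
  qed
  define G :: "int poly" where "G = (\<Sum>s\<in>K. monom 1 (\<alpha> s) * (\<Prod>t\<in>K-{s}. 1 - monom 1 (n t)))"
  have Gf: "poly (ci G) z = f z * (\<Prod>t\<in>K. (1 - z ^ n t))" if z: "\<forall>t\<in>K. z ^ n t \<noteq> 1" for z
  proof -
    have "poly (ci G) z = (\<Sum>s\<in>K. z ^ \<alpha> s * (\<Prod>t\<in>K-{s}. 1 - z ^ n t))"
      unfolding G_def by (simp add: poly_sum poly_prod poly_monom)
    also have "\<dots> = (\<Sum>s\<in>K. z ^ \<alpha> s / (1 - z ^ n s) * (\<Prod>t\<in>K. (1 - z ^ n t)))"
    proof (rule sum.cong)
      fix s assume s: "s \<in> K"
      have "(\<Prod>t\<in>K. (1 - z ^ n t)) = (1 - z ^ n s) * (\<Prod>t\<in>K-{s}. 1 - z ^ n t)"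
        using s finK by (simp add: prod.remove)
      moreover have "1 - z ^ n s \<noteq> 0" using z s by auto
      ultimately show "z ^ \<alpha> s * (\<Prod>t\<in>K-{s}. 1 - z ^ n t) =
          z ^ \<alpha> s / (1 - z ^ n s) * (\<Prod>t\<in>K. (1 - z ^ n t))" by simp
    qed simp
    also have "\<dots> = f z * (\<Prod>t\<in>K. (1 - z ^ n t))" unfolding f_def by (simp add: sum_distrib_right)
    finally show ?thesis .
  qed
  have "\<not> p dvd 1" using p1 by auto
  hence "poly (ci G) \<zeta> = 0" using Gf[of \<zeta>] zne[of _ 1] fz by simp
  hence Gz: "poly (ci G) (zeta p) = 0" by (simp add: \<zeta>_def)
  have f_conj: "f (\<zeta> ^ j) = 0" if j: "\<not> p dvd j" for j
  proof -
    have "poly (ci G) (\<zeta> ^ j) = 0" unfolding \<zeta>_def by (rule conj_root[OF pr Gz j])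
    moreover have "(\<Prod>t\<in>K. (1 - (\<zeta> ^ j) ^ n t)) \<noteq> 0" using zne[OF _ j] finK by auto
    ultimately show ?thesis using Gf[of "\<zeta> ^ j"] zne[OF _ j] by simp
  qed
  define Ws where "Ws s = {z::complex. z ^ n s = 1}" for s
  define W where "W = (\<Union>s\<in>K. Ws s)"
  have n1: "n s \<ge> 1" if "s \<in> K" for s using npos[of s] that by (simp add: K_def)
  have finWs: "finite (Ws s)" if "s \<in> K" for s
    unfolding Ws_def using n1[OF that] by (intro finite_roots_unity) auto
  have finW: "finite W" unfolding W_def using finK finWs by auto
  have WsW: "Ws s \<subseteq> W" if "s \<in> K" for s using that unfolding W_def by auto
  have cWs: "card (Ws s) = n s" if "s \<in> K" for s
    unfolding Ws_def using n1[OF that] by (rule card_complex_roots_unity)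
  have nW: "n s \<le> card W" if "s \<in> K" for s
    using card_mono[OF finW WsW[OF that]] cWs[OF that] by simp
  define D where "D = (\<Prod>w\<in>W. [:-w, 1:])"
  define Q where "Q s = (\<Prod>w\<in>W - Ws s. [:-w, 1:])" for s
  have DQ: "D = (monom 1 (n s) - 1) * Q s" if "s \<in> K" for s
  proof -
    have "D = Q s * (\<Prod>w\<in>Ws s. [:-w, 1:])" unfolding D_def Q_def
      by (rule prod.subset_diff[OF WsW[OF that] finW])
    thus ?thesis unfolding Ws_def using roots_unity_decomp[OF n1[OF that]] by (simp add: mult.commute)
  qed
  have dQ: "degree (Q s) = card W - n s" if "s \<in> K" for s
  proof -
    have "degree (Q s) = card (W - Ws s)" unfolding Q_def by (subst degree_prod_sum_eq) auto
    also have "\<dots> = card W - n s" using card_Diff_subset[OF finWs[OF that] WsW[OF that]] cWs[OF that] by simp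
    finally show ?thesis .
  qed
  define P where "P = (\<Sum>s\<in>K. monom 1 (\<alpha> s) * Q s)"
  have Wpos: "card W > 0" using nW n1 Kne by fastforce
  have dP: "degree P < card W" unfolding P_def
  proof (rule degree_sum_less[OF _ Wpos])
    fix s assume s: "s \<in> K"
    have "degree (monom (1::complex) (\<alpha> s) * Q s) \<le> degree (monom (1::complex) (\<alpha> s)) + degree (Q s)"
      by (rule degree_mult_le)
    also have "\<dots> \<le> \<alpha> s + (card W - n s)" using dQ[OF s] by (simp add: degree_monom_le)
    also have "\<dots> < card W"
    proof -
      have "\<alpha> s < n s" using arange[of s] s unfolding \<alpha>_def K_def by (simp add: nat_less_iff)
      thus ?thesis using nW[OF s] by linarith
    qed
    finally show "degree (monom 1 (\<alpha> s) * Q s) < card W" .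
  qed
  have PD: "poly P z = - poly D z * f z" if z: "\<forall>s\<in>K. z ^ n s \<noteq> 1" for z
  proof -
    have "poly P z = (\<Sum>s\<in>K. z ^ \<alpha> s * poly (Q s) z)" unfolding P_def by (simp add: poly_sum poly_monom)
    also have "\<dots> = (\<Sum>s\<in>K. - poly D z * (z ^ \<alpha> s / (1 - z ^ n s)))"
    proof (rule sum.cong)
      fix s assume s: "s \<in> K"
      have "poly D z = (z ^ n s - 1) * poly (Q s) z"
        by (subst DQ[OF s]) (simp add: poly_monom)
      hence Dz: "- poly D z = (1 - z ^ n s) * poly (Q s) z" by (simp add: algebra_simps)
      have ne: "1 - z ^ n s \<noteq> 0" using z s by auto
      show "z ^ \<alpha> s * poly (Q s) z = - poly D z * (z ^ \<alpha> s / (1 - z ^ n s))"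
        unfolding Dz using ne by simp
    qed simp
    also have "\<dots> = - poly D z * f z" unfolding f_def by (simp add: sum_distrib_left)
    finally show ?thesis .
  qed
  define z0 :: complex where "z0 = of_real (1/2)"
  have z0n: "z0 ^ n s \<noteq> 1" if "s \<in> K" for s
  proof -
    have "(1/2::real) ^ n s < 1" using n1[OF that] by (simp add: power_less_one_iff)
    thus ?thesis unfolding z0_def by (metis of_real_eq_1_iff of_real_power less_irrefl)
  qed
  have Dz0: "poly D z0 \<noteq> 0"
  proof -
    have "z0 - w \<noteq> 0" if "w \<in> W" for w
      using that z0n unfolding W_def Ws_def by auto
    thus ?thesis unfolding D_def poly_prod using finW by simp
  qed
  have fz0: "f z0 \<noteq> 0"
  proof -
    have "f z0 = of_real (\<Sum>s\<in>K. (1/2::real) ^ \<alpha> s / (1 - (1/2) ^ n s))"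
      unfolding f_def z0_def by simp
    moreover have "(\<Sum>s\<in>K. (1/2::real) ^ \<alpha> s / (1 - (1/2) ^ n s)) > 0"
    proof (rule sum_pos[OF finK Kne])
      fix s assume s: "s \<in> K"
      have "(1/2::real) ^ n s < 1" using n1[OF s] by (simp add: power_less_one_iff)
      thus "(1/2::real) ^ \<alpha> s / (1 - (1/2) ^ n s) > 0" by simp
    qed
    ultimately show ?thesis by (metis of_real_eq_0_iff order_less_irrefl)
  qed
  have P0: "P \<noteq> 0"
  proof
    assume "P = 0"
    hence "poly P z0 = 0" by simp
    thus False using PD[of z0] z0n Dz0 fz0 by simp
  qed
  define R where "R = (\<lambda>j. \<zeta> ^ j) ` {1..<p}"
  have RP: "R \<subseteq> {x. poly P x = 0}"
  proof
    fix x assume "x \<in> R"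
    then obtain j where j: "j \<in> {1..<p}" "x = \<zeta> ^ j" unfolding R_def by blast
    have jd: "\<not> p dvd j" using j by (auto dest: dvd_imp_le)
    show "x \<in> {x. poly P x = 0}" using PD[of x] zne[OF _ jd] f_conj[OF jd] j by simp
  qed
  have z0ne: "\<zeta> \<noteq> 0" unfolding \<zeta>_def zeta_def by simp
  have injR: "inj_on (\<lambda>j. \<zeta> ^ j) {1..<p}"
  proof -
    have *: "False" if "i < j" "j < p" "\<zeta> ^ i = \<zeta> ^ j" for i j
    proof -
      have "\<zeta> ^ j = \<zeta> ^ i * \<zeta> ^ (j - i)" using \<open>i < j\<close> by (simp add: power_add[symmetric])
      hence "\<zeta> ^ (j - i) = 1" using that z0ne by simp
      hence "p dvd (j - i)" unfolding \<zeta>_def using p1 by (simp add: zeta_pow_eq_1)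
      thus False using that by (auto dest: dvd_imp_le)
    qed
    show ?thesis by (rule inj_onI) (metis * atLeastLessThan_iff linorder_neqE_nat)
  qed
  have "p - 1 = card R" unfolding R_def using card_image[OF injR] by simp
  also have "\<dots> \<le> card {x. poly P x = 0}" using RP poly_roots_finite[OF P0] by (rule card_mono[rotated])
  also have "\<dots> \<le> degree P" by (rule card_poly_roots_bound[OF P0])
  finally have pW: "p - 1 < card W" using dP by linarith
  have WS: "W \<subseteq> (\<lambda>q. cis (2 * pi * of_rat q)) ` S_set k n"
  proof
    fix z assume "z \<in> W"
    then obtain s where s: "s \<in> K" "z ^ n s = 1" unfolding W_def Ws_def by auto
    then obtain j where j: "j < n s" "z = exp (2 * of_real pi * \<i> * of_nat j / of_nat (n s))"
      using complex_roots_unity[OF n1[OF s(1)]] by blast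
    have "z = cis (2 * pi * of_rat (of_nat j / of_nat (n s)))"
      unfolding j cis_conv_exp by (simp add: of_rat_divide field_simps)
    moreover have "of_nat j / of_nat (n s) \<in> S_set k n" unfolding S_set_def using s j K_def by auto
    ultimately show "z \<in> (\<lambda>q. cis (2 * pi * of_rat q)) ` S_set k n" by blast
  qed
  have "card W \<le> card (S_set k n)"
    using card_mono[OF finite_imageI[OF finS] WS] card_image_le[OF finS, of "\<lambda>q. cis (2 * pi * of_rat q)"] by linarith
  thus ?thesis using up pW by linarith
qed

end
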